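(* Let $f,g\in\mathrm{PF}$, and assume $f$ is mean Lipschitz smooth with mean Lipschitz constant $L^\mu_f$. Then the convolution $(f*g)(t)=\frac1{2\pi}\int_0^{2\pi}f(t-\tau)g(\tau)\,\mathrm d\tau$ is Lipschitz continuous with Lipschitz constant at most $L^\mu_f$.
   Context: $\mathrm{PF}$ denotes the set of functions $f:\mathbb R\to\mathbb C$ that are $2\pi$-periodic, satisfy $\int_0^{2\pi}f(t)\,\mathrm dt=0$, and $\sup_t|f(t)|\le1$. A $2\pi$-periodic function $f$ is mean Lipschitz smooth with mean Lipschitz constant $L^\mu_f$ if for all $\delta\in(0,\pi]$, $$\frac1{2\pi}\int_0^{2\pi}\sup_{r\in[-\delta,\delta]}|f(t+r)-f(t)|\,\mathrm dt\le L^\mu_f\,\delta.$$ Here a function $u$ is Lipschitz continuous with constant $L$ if $\sup_{r\in[-\delta,\delta]}|u(t+r)-u(t)|\le L\delta$ for all $t\in\mathbb R$, $\delta>0$. *)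

theory Defs
  imports "HOL-Analysis.Analysis"
begin

text \<open>The class PF: 2pi-periodic, mean zero over a period, bounded by 1.
  The integral is the Henstock-Kurzweil integral over [0,2pi]; integrability is
  required so that the mean-zero condition is meaningful.\<close>
definition PF :: "(real \<Rightarrow> complex) \<Rightarrow> bool" where
  "PF f \<longleftrightarrow> (\<forall>t. f (t + 2 * pi) = f t)
     \<and> f integrable_on {0..2*pi}
     \<and> integral {0..2*pi} f = 0
     \<and> (\<forall>t. norm (f t) \<le> 1)"

definition mean_lipschitz :: "(real \<Rightarrow> complex) \<Rightarrow> real \<Rightarrow> bool" where
  "mean_lipschitz f L \<longleftrightarrow> (\<forall>t. f (t + 2 * pi) = f t) \<and>
     (\<forall>\<delta>\<in>{0<..pi}.
        (\<lambda>t. SUP r\<in>{-\<delta>..\<delta>}. norm (f (t + r) - f t)) integrable_on {0..2*pi}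
      \<and> (1 / (2*pi)) * integral {0..2*pi} (\<lambda>t. SUP r\<in>{-\<delta>..\<delta>}. norm (f (t + r) - f t))
          \<le> L * \<delta>)"

definition lipschitz_const :: "(real \<Rightarrow> complex) \<Rightarrow> real \<Rightarrow> bool" where
  "lipschitz_const u L \<longleftrightarrow>
     (\<forall>t \<delta>. \<delta> > 0 \<longrightarrow> (SUP r\<in>{-\<delta>..\<delta>}. norm (u (t + r) - u t)) \<le> L * \<delta>)"

definition conv :: "(real \<Rightarrow> complex) \<Rightarrow> (real \<Rightarrow> complex) \<Rightarrow> real \<Rightarrow> complex" where
  "conv f g t = complex_of_real (1 / (2*pi)) * integral {0..2*pi} (\<lambda>\<tau>. f (t - \<tau>) * g \<tau>)"

end

theory Submission
  imports Defs
begin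
lemma prod_int:
  fixes p q :: "real \<Rightarrow> complex"
  assumes "p integrable_on {a..b}" "q integrable_on {a..b}"
    "\<And>x. norm (p x) \<le> 1" "\<And>x. norm (q x) \<le> 1"
  shows "(\<lambda>x. p x * q x) integrable_on {a..b}"
proof -
  have m: "(\<lambda>x. p x * q x) \<in> borel_measurable (lebesgue_on {a..b})"
    using integrable_imp_measurable[OF assms(1)] integrable_imp_measurable[OF assms(2)]
    by (intro borel_measurable_times) auto
  have "(\<lambda>x. p x * q x) absolutely_integrable_on {a..b}"
  proof (rule measurable_bounded_by_integrable_imp_absolutely_integrable[OF m, where g="\<lambda>_. 1"])
    show "{a..b} \<in> sets lebesgue" by simp
    show "(\<lambda>_. 1::real) integrable_on {a..b}" by (rule integrable_const_ivl)
    fix x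
    have "norm (p x * q x) = norm (p x) * norm (q x)" by (rule norm_mult)
    also have "\<dots> \<le> 1" using assms(3,4) by (intro mult_le_one) auto
    finally show "norm (p x * q x) \<le> 1" .
  qed
  then show ?thesis using absolutely_integrable_on_def by blast
qed

lemma per_nat:
  assumes "\<forall>t. h (t + 2*pi) = h t"
  shows "h (x + 2*pi*real m) = h x"
proof (induction m arbitrary: x)
  case 0 then show ?case by simp
next
  case (Suc m)
  have "h (x + 2*pi*real (Suc m)) = h ((x + 2*pi*real m) + 2*pi)" by (simp add: algebra_simps)
  then show ?case using assms Suc by simp
qed

lemma per_int:
  assumes "\<forall>t. h (t + 2*pi) = h t"
  shows "h (x + 2*pi*real_of_int n) = h x"
proof (cases "n \<ge> 0")
  case True
  then have "real_of_int n = real (nat n)" by simp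
  then show ?thesis using per_nat[OF assms] by metis
next
  case False
  then have e: "real_of_int n = - real (nat (-n))" by simp
  have "h x = h ((x + 2*pi*real_of_int n) + 2*pi*real (nat (-n)))"
    by (simp add: e)
  also have "\<dots> = h (x + 2*pi*real_of_int n)" by (rule per_nat[OF assms])
  finally show ?thesis by simp
qed

lemma per_shift:
  fixes h :: "real \<Rightarrow> 'a::banach"
  assumes per: "\<forall>t. h (t + 2*pi) = h t" and hi: "h integrable_on {0..2*pi}"
  shows "(h has_integral integral {0..2*pi} h) {c..c+2*pi}"
proof -
  define n where "n = floor (c/(2*pi))"
  define s where "s = c - 2*pi*real_of_int n"
  have "real_of_int n \<le> c/(2*pi)" "c/(2*pi) < real_of_int n + 1" unfolding n_def by linarith+
  then have s0: "0 \<le> s" and s1: "s \<le> 2*pi" unfolding s_def using pi_gt_zero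
    by (simp_all add: field_simps)
  have A: "(h has_integral integral {0..s} h) {0..s}"
    using integrable_subinterval_real[OF hi] s1 by auto
  have B: "(h has_integral integral {s..2*pi} h) {s..2*pi}"
    using integrable_subinterval_real[OF hi] s0 by auto
  have A2: "((\<lambda>x. h (x + (-2*pi))) has_integral integral {0..s} h) {0-(-2*pi)..s-(-2*pi)}"
    by (rule has_integral_shift_real_ivl[OF A])
  have eq: "(\<lambda>x. h (x + (-2*pi))) = h"
  proof
    fix x show "h (x + (-2*pi)) = h x" using per[rule_format, of "x - 2*pi"] by simp
  qed
  have A3: "(h has_integral integral {0..s} h) {2*pi..s+2*pi}"
    using A2 unfolding eq by (simp add: add.commute)
  have C: "(h has_integral (integral {s..2*pi} h + integral {0..s} h)) {s..s+2*pi}"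
    by (rule has_integral_combine[OF _ _ B A3]) (use s0 s1 in auto)
  have "integral {s..2*pi} h + integral {0..s} h = integral {0..2*pi} h"
    using Henstock_Kurzweil_Integration.integral_combine[OF s0 s1 hi] by (simp add: add.commute)
  with C have C2: "(h has_integral integral {0..2*pi} h) {s..s+2*pi}" by simp
  have D: "((\<lambda>x. h (x + (- 2*pi*real_of_int n))) has_integral integral {0..2*pi} h)
     {s-(- 2*pi*real_of_int n)..s+2*pi-(- 2*pi*real_of_int n)}"
    by (rule has_integral_shift_real_ivl[OF C2])
  have eq2: "(\<lambda>x. h (x + (- 2*pi*real_of_int n))) = h"
  proof
    fix x show "h (x + (- 2*pi*real_of_int n)) = h x"
      using per_int[OF per, of "x + (- 2*pi*real_of_int n)" n] by simp
  qed
  show ?thesis using D unfolding eq2 s_def by (simp add: algebra_simps)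
qed

lemma per_refl:
  fixes h :: "real \<Rightarrow> 'a::banach"
  assumes per: "\<forall>t. h (t + 2*pi) = h t" and hi: "h integrable_on {0..2*pi}"
  shows "((\<lambda>\<tau>. h (c - \<tau>)) has_integral integral {0..2*pi} h) {0..2*pi}"
proof -
  have "(h has_integral integral {0..2*pi} h) {(c-2*pi)..(c-2*pi)+2*pi}"
    by (rule per_shift[OF per hi])
  from has_integral_shift_real_ivl[OF this, of c]
  have R: "((\<lambda>x. h (x + c)) has_integral integral {0..2*pi} h) {-(2*pi)..0}" by simp
  have R2: "((\<lambda>x. h (-x + c)) has_integral integral {0..2*pi} h) {-0..-(-(2*pi))}"
    using has_integral_reflect_lemma_real[OF R] by simp
  have e: "(\<lambda>x. h (-x + c)) = (\<lambda>\<tau>. h (c - \<tau>))" by (simp add: fun_eq_iff)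
  show ?thesis using R2 unfolding e by simp
qed

lemma norm_diff_le2:
  fixes f :: "real \<Rightarrow> complex"
  assumes "\<forall>t. norm (f t) \<le> 1"
  shows "bdd_above ((\<lambda>r. norm (f (s + r) - f s)) ` A)"
proof (rule bdd_aboveI2)
  fix r
  have "norm (f (s + r) - f s) \<le> norm (f (s+r)) + norm (f s)" by (rule norm_triangle_ineq4)
  also have "\<dots> \<le> 1 + 1" using assms by (intro add_mono) auto
  also have "\<dots> = 2" by simp
  finally show "norm (f (s + r) - f s) \<le> 2" .
qed

theorem lemma2:
  fixes f g :: "real \<Rightarrow> complex" and L :: real
  assumes "PF f" and "PF g" and "mean_lipschitz f L"
  shows "lipschitz_const (conv f g) L"
proof -
  have perf: "\<forall>t. f (t + 2*pi) = f t" and fi: "f integrable_on {0..2*pi}"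
    and fb: "\<forall>t. norm (f t) \<le> 1" using assms(1) unfolding PF_def by auto
  have gi: "g integrable_on {0..2*pi}"
    and gb: "\<forall>t. norm (g t) \<le> 1" using assms(2) unfolding PF_def by auto
  have MLip: "\<And>d. d \<in> {0<..pi} \<Longrightarrow>
        (\<lambda>t. SUP r\<in>{-d..d}. norm (f (t + r) - f t)) integrable_on {0..2*pi}
      \<and> (1 / (2*pi)) * integral {0..2*pi} (\<lambda>t. SUP r\<in>{-d..d}. norm (f (t + r) - f t))
          \<le> L * d"
    using assms(3) unfolding mean_lipschitz_def by blast
  define u where "u = conv f g"
  have bdd: "\<And>s A. bdd_above ((\<lambda>r. norm (f (s + r) - f s)) ` A)"
    by (rule norm_diff_le2[OF fb])
  have L0: "L \<ge> 0"
  proof -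
    have "pi \<in> {0<..pi}" by simp
    from MLip[OF this] have i: "(\<lambda>t. SUP r\<in>{-pi..pi}. norm (f (t + r) - f t)) integrable_on {0..2*pi}"
      and le: "(1 / (2*pi)) * integral {0..2*pi} (\<lambda>t. SUP r\<in>{-pi..pi}. norm (f (t + r) - f t)) \<le> L * pi"
      by auto
    have "\<And>t. 0 \<le> (SUP r\<in>{-pi..pi}. norm (f (t + r) - f t))"
    proof -
      fix t
      have "(0::real) \<in> {-pi..pi}" by simp
      from cSUP_upper[OF this bdd] show "0 \<le> (SUP r\<in>{-pi..pi}. norm (f (t + r) - f t))"
        by (meson norm_ge_zero order_trans)
    qed
    then have "0 \<le> integral {0..2*pi} (\<lambda>t. SUP r\<in>{-pi..pi}. norm (f (t + r) - f t))"
      by (intro integral_nonneg[OF i]) auto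
    moreover have "0 < 1 / (2*pi)" using pi_gt_zero by simp
    ultimately have "0 \<le> (1 / (2*pi)) * integral {0..2*pi} (\<lambda>t. SUP r\<in>{-pi..pi}. norm (f (t + r) - f t))"
      by simp
    then have "0 \<le> L * pi" using le by linarith
    then show ?thesis using pi_gt_zero by (simp add: zero_le_mult_iff)
  qed
  have uper: "u (x + 2*pi*real_of_int n) = u x" for x n
  proof -
    have "\<And>\<tau>. f (x + 2*pi*real_of_int n - \<tau>) = f (x - \<tau>)"
    proof -
      fix \<tau>
      have "f (x + 2*pi*real_of_int n - \<tau>) = f ((x - \<tau>) + 2*pi*real_of_int n)"
        by (simp add: algebra_simps)
      also have "\<dots> = f (x - \<tau>)" by (rule per_int[OF perf])
      finally show "f (x + 2*pi*real_of_int n - \<tau>) = f (x - \<tau>)" .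
    qed
    then show ?thesis unfolding u_def conv_def by simp
  qed
  have core: "norm (u (t + r) - u t) \<le> L * d" if d0: "0 < d" and dpi: "d \<le> pi" and rd: "\<bar>r\<bar> \<le> d" for t r d
  proof -
    define S where "S = (\<lambda>s. SUP r\<in>{-d..d}. norm (f (s + r) - f s))"
    have "d \<in> {0<..pi}" using d0 dpi by simp
    from MLip[OF this] have Sint: "S integrable_on {0..2*pi}"
      and Sle: "(1 / (2*pi)) * integral {0..2*pi} S \<le> L * d" unfolding S_def by auto
    have Sper: "\<forall>s. S (s + 2*pi) = S s"
    proof
      fix s
      have "\<And>r. f (s + 2*pi + r) = f (s + r)" using perf by (metis add.assoc add.commute)
      then show "S (s + 2*pi) = S s" unfolding S_def using perf by simp
    qed
    have F1: "(\<lambda>\<tau>. f (t + r - \<tau>)) integrable_on {0..2*pi}"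
      using per_refl[OF perf fi, of "t+r"] by blast
    have F0: "(\<lambda>\<tau>. f (t - \<tau>)) integrable_on {0..2*pi}"
      using per_refl[OF perf fi, of "t"] by blast
    have P1: "(\<lambda>\<tau>. f (t + r - \<tau>) * g \<tau>) integrable_on {0..2*pi}"
      by (rule prod_int[OF F1 gi]) (use fb gb in auto)
    have P0: "(\<lambda>\<tau>. f (t - \<tau>) * g \<tau>) integrable_on {0..2*pi}"
      by (rule prod_int[OF F0 gi]) (use fb gb in auto)
    have PD: "(\<lambda>\<tau>. (f (t + r - \<tau>) - f (t - \<tau>)) * g \<tau>) integrable_on {0..2*pi}"
      using integrable_diff[OF P1 P0] by (simp add: left_diff_distrib)
    have diff: "u (t + r) - u t = complex_of_real (1 / (2*pi)) *
        integral {0..2*pi} (\<lambda>\<tau>. (f (t + r - \<tau>) - f (t - \<tau>)) * g \<tau>)"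
      unfolding u_def conv_def
      using integral_diff[OF P1 P0] by (simp add: left_diff_distrib right_diff_distrib)
    have SI: "((\<lambda>\<tau>. S (t - \<tau>)) has_integral integral {0..2*pi} S) {0..2*pi}"
      by (rule per_refl[OF Sper Sint])
    have bound: "norm (integral {0..2*pi} (\<lambda>\<tau>. (f (t + r - \<tau>) - f (t - \<tau>)) * g \<tau>))
        \<le> integral {0..2*pi} (\<lambda>\<tau>. S (t - \<tau>))"
    proof (rule integral_norm_bound_integral[OF PD])
      show "(\<lambda>\<tau>. S (t - \<tau>)) integrable_on {0..2*pi}" using SI by blast
    next
      fix \<tau>
      have rin: "r \<in> {-d..d}" using rd by auto
      have "norm (f (t - \<tau> + r) - f (t - \<tau>)) \<le> S (t - \<tau>)"
        unfolding S_def by (rule cSUP_upper[OF rin bdd])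
      moreover have "t - \<tau> + r = t + r - \<tau>" by simp
      ultimately have a: "norm (f (t + r - \<tau>) - f (t - \<tau>)) \<le> S (t - \<tau>)" by simp
      have "norm ((f (t + r - \<tau>) - f (t - \<tau>)) * g \<tau>) = norm (f (t + r - \<tau>) - f (t - \<tau>)) * norm (g \<tau>)"
        by (simp add: norm_mult)
      also have "\<dots> \<le> norm (f (t + r - \<tau>) - f (t - \<tau>))"
        using gb by (simp add: mult_left_le)
      finally show "norm ((f (t + r - \<tau>) - f (t - \<tau>)) * g \<tau>) \<le> S (t - \<tau>)" using a by simp
    qed
    have "norm (u (t + r) - u t) = (1 / (2*pi)) *
        norm (integral {0..2*pi} (\<lambda>\<tau>. (f (t + r - \<tau>) - f (t - \<tau>)) * g \<tau>))"
      unfolding diff by (simp only: norm_mult norm_of_real) (use pi_gt_zero in simp)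
    also have "\<dots> \<le> (1 / (2*pi)) * integral {0..2*pi} S"
      using bound SI integral_unique[OF SI] by (intro mult_left_mono) auto
    also have "\<dots> \<le> L * d" by (rule Sle)
    finally show ?thesis .
  qed
  show ?thesis
    unfolding lipschitz_const_def u_def[symmetric]
  proof (intro allI impI)
    fix t \<delta> :: real
    assume d0: "\<delta> > 0"
    define d where "d = min \<delta> pi"
    have dpos: "0 < d" and dpi: "d \<le> pi" and dd: "d \<le> \<delta>" using d0 pi_gt_zero unfolding d_def by auto
    show "(SUP r\<in>{-\<delta>..\<delta>}. norm (u (t + r) - u t)) \<le> L * \<delta>"
    proof (rule cSUP_least)
      show "{-\<delta>..\<delta>} \<noteq> {}" using d0 by simp
    next
      fix r assume r: "r \<in> {-\<delta>..\<delta>}"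
      obtain r' where r': "\<bar>r'\<bar> \<le> d" and ur: "u (t + r) = u (t + r')"
      proof (cases "\<bar>r\<bar> \<le> pi")
        case True
        then have "\<bar>r\<bar> \<le> d" using r unfolding d_def by auto
        then show ?thesis using that by blast
      next
        case False
        then have "d = pi" using r unfolding d_def by auto
        define n where "n = floor ((r + pi) / (2*pi))"
        have "real_of_int n \<le> (r + pi) / (2*pi)" "(r + pi) / (2*pi) < real_of_int n + 1"
          unfolding n_def by linarith+
        then have "-pi \<le> r - 2*pi*real_of_int n" "r - 2*pi*real_of_int n \<le> pi"
          using pi_gt_zero by (simp_all add: field_simps)
        then have a: "\<bar>r - 2*pi*real_of_int n\<bar> \<le> d" using \<open>d = pi\<close> by auto
        have "u (t + r) = u ((t + (r - 2*pi*real_of_int n)) + 2*pi*real_of_int n)" by simp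
        also have "\<dots> = u (t + (r - 2*pi*real_of_int n))" by (rule uper)
        finally show ?thesis using that a by blast
      qed
      have "norm (u (t + r) - u t) = norm (u (t + r') - u t)" using ur by simp
      also have "\<dots> \<le> L * d" by (rule core[OF dpos dpi r'])
      also have "\<dots> \<le> L * \<delta>" using dd L0 by (rule mult_left_mono)
      finally show "norm (u (t + r) - u t) \<le> L * \<delta>" .
    qed
  qed
qed

end
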